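(* Let $k\ge 2$ be an integer. Let $E_{k+3}(C_3)$ be the Schwarzenberger bundle on $\mathbb{P}^3=\mathbb{P}(S_3)$ defined by the exact sequence $$0\to S_k\otimes\mathcal{O}_{\mathbb{P}(S_3)}(-1)\xrightarrow{M} S_{k+3}\otimes\mathcal{O}_{\mathbb{P}(S_3)}\to E_{k+3}(C_3)\to0,$$ where ${}^tM$ is the $(k+1)\times(k+4)$ matrix whose $i$-th row ($i=0,\dots,k$) has entries $X_0,X_1,X_2,X_3$ in columns $i,i+1,i+2,i+3$ and zeros elsewhere. Let $H\subset\mathbb{P}^3$ be a general plane, let $E_{k+3}(\overline{C_3}):=E_{k+3}(C_3)|_H$ (a Steiner bundle of rank 3 on $H$), and let $\overline{C_3}$ be the image of the twisted cubic $C_3\subset\mathbb{P}^{3\vee}$ under the linear projection from the point $H^\vee$, viewed as a (singular) cubic curve in the dual plane of $H$: it is the set of lines $H'\cap H\subset H$ with $H'^\vee\in C_3$. Then the set of unstable lines of $E_{k+3}(\overline{C_3})$ in $H$ is exactly $\overline{C_3}$, i.e. a line $l\subset H$ satisfies $H^0((E_{k+3}(\overline{C_3})|_l)^\vee)\neq0$ if and only if $l=H'\cap H$ for some plane $H'$ with $H'^\vee\in C_3$.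
   Context: Work over $\mathbb{C}$. $U$ is a 2-dimensional vector space, $S_i=\mathrm{Sym}^iU$, $(X_0,\dots,X_3)$ are coordinates on $\mathbb{P}^3=\mathbb{P}(S_3)$, and $C_3\subset\mathbb{P}^{3\vee}=\mathbb{P}(S_3^\vee)$ is the twisted cubic, image of $\mathbb{P}(S_1^\vee)$ by the Veronese embedding. For a plane $H'\subset\mathbb{P}^3$, $H'^\vee\in\mathbb{P}^{3\vee}$ is its dual point. For general $H$, $H^\vee\notin C_3$. *)

theory Defs
  imports Complex_Main
begin

(* Vectors of S_3 = C^4 (coordinates X_0..X_3) and of its dual are modelled as
   functions nat => complex vanishing from index 4 on.  Projective subvarieties
   are modelled by their affine cones in C^4. *)

definition V4 :: "(nat \<Rightarrow> complex) set" where
  "V4 = {x. \<forall>i\<ge>4. x i = 0}"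

definition pair4 :: "(nat \<Rightarrow> complex) \<Rightarrow> (nat \<Rightarrow> complex) \<Rightarrow> complex" where
  "pair4 a x = (\<Sum>i<4. a i * x i)"

definition plane :: "(nat \<Rightarrow> complex) \<Rightarrow> (nat \<Rightarrow> complex) set" where
  "plane a = {x \<in> V4. pair4 a x = 0}"

definition is_line :: "(nat \<Rightarrow> complex) set \<Rightarrow> bool" where
  "is_line l \<longleftrightarrow> (\<exists>p q. p \<in> V4 \<and> q \<in> V4 \<and>
      (\<forall>\<alpha> \<beta>. (\<forall>i. \<alpha> * p i + \<beta> * q i = 0) \<longrightarrow> \<alpha> = 0 \<and> \<beta> = 0) \<and>
      l = {x. \<exists>\<alpha> \<beta>. x = (\<lambda>i. \<alpha> * p i + \<beta> * q i)})"

(* twisted cubic C_3 in P^3-dual: Veronese image [s^3 : s^2 t : s t^2 : t^3]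
   of P(S_1^dual), coordinates dual to X_0..X_3 *)
definition in_C3 :: "(nat \<Rightarrow> complex) \<Rightarrow> bool" where
  "in_C3 b \<longleftrightarrow> (\<exists>s t. (s \<noteq> 0 \<or> t \<noteq> 0) \<and>
      b = (\<lambda>i. if i < 4 then s ^ (3 - i) * t ^ i else 0))"

definition tM_apply :: "nat \<Rightarrow> (nat \<Rightarrow> complex) \<Rightarrow> (nat \<Rightarrow> complex) \<Rightarrow> nat \<Rightarrow> complex" where
  "tM_apply k x v i = (\<Sum>j<4. x j * v (i + j))"

(* H^0((E_{k+3}(C_3)|_l)^dual) <> 0.  Dualising
   0 -> S_k(-1) -M-> S_{k+3} -> E -> 0 restricted to l gives
   0 -> H^0(E|_l^dual) -> S_{k+3}^dual -> S_k^dual (x) H^0(O_l(1)),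
   so H^0(E|_l^dual) = { v in C^{k+4} | tM(x) v = 0 for all x in l }. *)
definition unstable_line :: "nat \<Rightarrow> (nat \<Rightarrow> complex) set \<Rightarrow> bool" where
  "unstable_line k l \<longleftrightarrow> (\<exists>v. (\<exists>j<k+4. v j \<noteq> 0) \<and>
      (\<forall>x\<in>l. \<forall>i\<le>k. tM_apply k x v i = 0))"

end

theory Submission imports Defs "HOL-Computational_Algebra.Computational_Algebra" "HOL-Computational_Algebra.Field_as_Ring" begin

definition PP :: "(nat \<Rightarrow> complex) \<Rightarrow> complex poly" where
  "PP p = (\<Sum>j<4. monom (p j) j)"

lemma coeff_PP: "coeff (PP p) n = (if n < 4 then p n else 0)"
  by (simp add: PP_def coeff_sum coeff_monom)

lemma poly_PP: "poly (PP p) z = (\<Sum>j<4. p j * z ^ j)"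
  by (simp add: PP_def poly_sum poly_monom)

lemma degree_PP: "degree (PP p) \<le> 3"
  by (rule degree_le) (simp add: coeff_PP)

lemma degree_PP3: "p 3 \<noteq> 0 \<Longrightarrow> degree (PP p) = 3"
  using degree_PP[of p] le_degree[of "PP p" 3] by (simp add: coeff_PP)

definition LL :: "nat \<Rightarrow> (nat \<Rightarrow> complex) \<Rightarrow> complex poly \<Rightarrow> complex" where
  "LL k v R = (\<Sum>n\<le>k+3. coeff R n * v n)"

lemma LL_add: "LL k v (A + B) = LL k v A + LL k v B"
  by (simp add: LL_def sum.distrib distrib_right)

lemma LL_sum: "LL k v (sum f S) = (\<Sum>s\<in>S. LL k v (f s))"
  by (simp add: LL_def coeff_sum sum_distrib_right sum.swap[of _ S])

lemma LL_monom_mult: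
  assumes "i \<le> k"
  shows "LL k v (monom c i * PP p) = c * (\<Sum>j<4. p j * v (i + j))"
proof -
  define F where "F n = (if n < i then 0 else c * coeff (PP p) (n - i)) * v n" for n
  have "c * (\<Sum>j<4. p j * v (i + j)) = (\<Sum>j<4. F (i + j))"
    by (simp add: F_def sum_distrib_left coeff_PP mult.assoc)
  also have "\<dots> = (\<Sum>n\<in>(\<lambda>j. i + j) ` {..<4}. F n)"
    by (simp add: sum.reindex)
  also have "\<dots> = (\<Sum>n\<le>k+3. F n)"
  proof (rule sum.mono_neutral_left)
    show "(\<lambda>j. i + j) ` {..<4} \<subseteq> {..k + 3}" using assms by auto
    show "\<forall>x\<in>{..k + 3} - (\<lambda>j. i + j) ` {..<4}. F x = 0"
    proof
      fix x assume "x \<in> {..k + 3} - (\<lambda>j. i + j) ` {..<4}"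
      then have "x < i \<or> x - i \<ge> 4"
        by (auto simp: image_iff) (metis add_diff_inverse_nat lessThan_iff not_less)
      then show "F x = 0" by (auto simp: F_def coeff_PP)
    qed
  qed auto
  finally show ?thesis by (simp add: LL_def coeff_monom_mult F_def)
qed

lemma LL_mult_zero:
  assumes "\<forall>i\<le>k. (\<Sum>j<4. p j * v (i + j)) = 0" "degree A \<le> k"
  shows "LL k v (A * PP p) = 0"
proof -
  have "A * PP p = (\<Sum>i\<le>k. monom (coeff A i) i * PP p)"
    by (simp add: poly_as_sum_of_monoms'[OF assms(2)] sum_distrib_right[symmetric])
  then show ?thesis using assms(1) by (simp add: LL_sum LL_monom_mult)
qed

lemma vanish:
  assumes k: "k \<ge> 2" and p3: "p 3 \<noteq> 0"
    and rp: "\<forall>i\<le>k. (\<Sum>j<4. p j * v (i + j)) = 0"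
    and rq: "\<forall>i\<le>k. (\<Sum>j<4. q j * v (i + j)) = 0"
    and nc: "\<forall>z. \<not> (poly (PP p) z = 0 \<and> poly (PP q) z = 0)"
    and n: "n < k + 4"
  shows "v n = 0"
proof -
  let ?P = "PP p" and ?Q = "PP q"
  have dP: "degree ?P = 3" using degree_PP3[of p, OF p3] .
  have P0: "?P \<noteq> 0" using dP by auto
  have "gcd ?P ?Q = 1"
  proof -
    let ?g = "gcd ?P ?Q"
    have g0: "?g \<noteq> 0" using P0 by simp
    have "degree ?g = 0"
    proof (rule ccontr)
      assume "degree ?g \<noteq> 0"
      then obtain z where "poly ?g z = 0"
        using fundamental_theorem_of_algebra[of ?g] constant_degree[of ?g] by auto
      moreover obtain h1 h2 where "?P = ?g * h1" "?Q = ?g * h2"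
        by (meson dvdE gcd_dvd1 gcd_dvd2)
      ultimately have "poly ?P z = 0" "poly ?Q z = 0"
        by (metis mult_zero_left poly_mult)+
      then show False using nc by blast
    qed
    then have "is_unit ?g" using is_unit_iff_degree[OF g0] by simp
    then show ?thesis by simp
  qed
  then obtain A B where AB: "A * ?P + B * ?Q = 1"
    using bezout_coefficients_fst_snd[of ?P ?Q] by metis
  have LR: "LL k v R = 0" if dR: "degree R \<le> k + 3" for R
  proof -
    define c where "c = (R * B) div ?P"
    define r where "r = (R * B) mod ?P"
    have RB: "R * B = c * ?P + r" unfolding c_def r_def by simp
    define X where "X = R * A + c * ?Q"
    have Req: "R = X * ?P + r * ?Q"
    proof -
      have "R = R * (A * ?P + B * ?Q)" using AB by simp
      also have "\<dots> = R * A * ?P + (R * B) * ?Q" by (simp add: algebra_simps)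
      also have "\<dots> = X * ?P + r * ?Q" unfolding RB X_def by (simp add: algebra_simps)
      finally show ?thesis .
    qed
    have dr: "degree r \<le> 2"
      using degree_mod_less[OF P0, of "R * B"] dP unfolding r_def by auto
    have drQ: "degree (r * ?Q) \<le> k + 3"
      using degree_mult_le[of r ?Q] dr degree_PP[of q] k by linarith
    have "X * ?P = R - r * ?Q" using Req by (simp add: algebra_simps)
    then have "degree (X * ?P) \<le> k + 3"
      using degree_diff_le[OF dR drQ] by simp
    then have dX: "degree X \<le> k"
      using dP P0 by (cases "X = 0") (auto simp: degree_mult_eq)
    have "LL k v R = LL k v (X * ?P) + LL k v (r * ?Q)"
      by (subst Req) (simp add: LL_add)
    also have "\<dots> = 0"
      using LL_mult_zero[OF rp dX] LL_mult_zero[OF rq, of r] dr k by simp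
    finally show ?thesis .
  qed
  have "LL k v (monom 1 n) = 0" using LR n by (simp add: degree_monom_eq)
  moreover have "LL k v (monom 1 n) = (\<Sum>m\<le>k+3. if n = m then v m else 0)"
    unfolding LL_def by (rule sum.cong) (auto simp: coeff_monom)
  ultimately show ?thesis using n by simp
qed


lemma sum4: "(\<Sum>i<(4::nat). f i) = f 0 + f 1 + f 2 + (f 3 :: complex)"
  by (simp add: eval_nat_numeral)

lemma pair4_lin: "pair4 a (\<lambda>c. \<alpha> * p c + \<beta> * q c) = \<alpha> * pair4 a p + \<beta> * pair4 a q"
  by (simp add: pair4_def sum_distrib_left sum.distrib algebra_simps)

lemma pair4_lin3: "pair4 a (\<lambda>c. x c + \<alpha> * p c + \<beta> * q c) = pair4 a x + \<alpha> * pair4 a p + \<beta> * pair4 a q"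
  by (simp add: pair4_def sum_distrib_left sum.distrib algebra_simps)

lemma pair4_gen:
  assumes d: "distinct [i, j, m, n :: nat]" and cov: "{i, j, m, n} = {..<4}"
  shows "pair4 f y = f i * y i + f j * y j + f m * y m + f n * y n"
proof -
  have "pair4 f y = (\<Sum>c\<in>{i,j,m,n}. f c * y c)" using cov by (simp add: pair4_def)
  also have "\<dots> = f i * y i + f j * y j + f m * y m + f n * y n"
    using d by (simp add: algebra_simps)
  finally show ?thesis .
qed

lemma kern_gen:
  fixes a b p q x :: "nat \<Rightarrow> complex"
  assumes d: "distinct [i, j, m, n]" and cov: "{i, j, m, n} = {..<4}"
    and minor: "a i * b j - a j * b i \<noteq> 0"
    and pa: "pair4 a p = 0" and pb: "pair4 b p = 0"
    and qa: "pair4 a q = 0" and qb: "pair4 b q = 0"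
    and xa: "pair4 a x = 0" and xb: "pair4 b x = 0"
    and V: "p \<in> V4" "q \<in> V4" "x \<in> V4"
    and ind: "\<forall>\<alpha> \<beta>. (\<forall>c. \<alpha> * p c + \<beta> * q c = 0) \<longrightarrow> \<alpha> = 0 \<and> \<beta> = 0"
  shows "\<exists>\<alpha> \<beta>. x = (\<lambda>c. \<alpha> * p c + \<beta> * q c)"
proof -
  note pg = pair4_gen[OF d cov]
  have key: "y i = 0 \<and> y j = 0" if "pair4 a y = 0" "pair4 b y = 0" "y m = 0" "y n = 0" for y
  proof -
    have e1: "a i * y i + a j * y j = 0" "b i * y i + b j * y j = 0"
      using that pg[of a y] pg[of b y] by simp_all
    have "y i * (a i * b j - a j * b i) = b j * (a i * y i + a j * y j) - a j * (b i * y i + b j * y j)"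
      by (simp add: algebra_simps)
    then have "y i * (a i * b j - a j * b i) = 0" using e1 by simp
    moreover have "y j * (a i * b j - a j * b i) = a i * (b i * y i + b j * y j) - b i * (a i * y i + a j * y j)"
      by (simp add: algebra_simps)
    then have "y j * (a i * b j - a j * b i) = 0" using e1 by simp
    ultimately show ?thesis using minor by simp
  qed
  have zero: "y = (\<lambda>_. 0)" if "y \<in> V4" "y i = 0" "y j = 0" "y m = 0" "y n = 0" for y
  proof
    fix c show "y c = 0"
    proof (cases "c < 4")
      case True then have "c \<in> {i,j,m,n}" using cov by auto
      then show ?thesis using that by auto
    next
      case False then show ?thesis using that(1) by (simp add: V4_def)
    qed
  qed
  have lin: "(\<lambda>c. \<alpha> * p c + \<beta> * q c) \<in> V4" for \<alpha> \<beta>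
    using V by (simp add: V4_def)
  have comb: "\<alpha> = 0 \<and> \<beta> = 0" if "(\<alpha> * p m + \<beta> * q m) = 0" "\<alpha> * p n + \<beta> * q n = 0" for \<alpha> \<beta>
  proof -
    let ?y = "\<lambda>c. \<alpha> * p c + \<beta> * q c"
    have "pair4 a ?y = 0" "pair4 b ?y = 0" using pa pb qa qb by (simp_all add: pair4_lin)
    then have "?y i = 0 \<and> ?y j = 0" using key[of ?y] that by simp
    then have "?y = (\<lambda>_. 0)" using zero[OF lin[of \<alpha> \<beta>]] that by simp
    then show ?thesis using ind by metis
  qed
  define D where "D = p m * q n - p n * q m"
  have D0: "D \<noteq> 0"
  proof
    assume D: "D = 0"
    have "q m = 0 \<and> - p m = 0" using comb[of "q m" "- p m"] D unfolding D_def by (simp add: algebra_simps)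
    moreover have "q n = 0 \<and> - p n = 0" using comb[of "q n" "- p n"] D unfolding D_def by (simp add: algebra_simps)
    ultimately have "(1::complex) = 0 \<and> (0::complex) = 0" using comb[of 1 0] by simp
    then show False by simp
  qed
  define \<alpha> where "\<alpha> = (x m * q n - x n * q m) / D"
  define \<beta> where "\<beta> = (p m * x n - p n * x m) / D"
  let ?y = "\<lambda>c. x c + (- \<alpha>) * p c + (- \<beta>) * q c"
  have ym: "?y m = 0" "?y n = 0" using D0 unfolding \<alpha>_def \<beta>_def D_def
    by (simp_all add: field_simps)
  have "pair4 a ?y = 0" "pair4 b ?y = 0"
    using pa pb qa qb xa xb by (simp_all only: pair4_lin3) simp_all
  then have "?y i = 0 \<and> ?y j = 0" using key[of ?y] ym by simp
  moreover have "?y \<in> V4" using V by (simp add: V4_def)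
  ultimately have "?y = (\<lambda>_. 0)" using zero[of ?y] ym by simp
  then have yz: "?y = (\<lambda>_. 0)" .
  have "x = (\<lambda>c. \<alpha> * p c + \<beta> * q c)"
  proof (rule ext)
    fix c have "?y c = 0" using yz by meson
    then show "x c = \<alpha> * p c + \<beta> * q c" by (simp add: algebra_simps)
  qed
  then show ?thesis by blast
qed


lemma perm_exists:
  assumes "i < 4" "j < (4::nat)" "i \<noteq> j"
  shows "\<exists>m n. distinct [i, j, m, n] \<and> {i, j, m, n} = {..<4}"
proof -
  have "card ({..<4::nat} - {i, j}) = 2"
    using assms by (subst card_Diff_subset) auto
  then obtain m where m: "m \<in> {..<4::nat} - {i, j}"
    by (metis card.empty ex_in_conv zero_neq_numeral)
  have "card ({..<4::nat} - {i, j, m}) = 1"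
    using assms m by (subst card_Diff_subset) auto
  then obtain n where n: "n \<in> {..<4::nat} - {i, j, m}"
    by (metis card.empty ex_in_conv zero_neq_one)
  have d: "distinct [i, j, m, n]" using m n assms by auto
  have "{i, j, m, n} = {..<4}"
  proof (rule card_subset_eq)
    show "{i, j, m, n} \<subseteq> {..<4}" using m n assms by auto
    show "card {i, j, m, n} = card {..<4::nat}" using d by simp
  qed simp
  then show ?thesis using d by blast
qed

lemma minor_exists:
  assumes "a \<in> V4" "b \<in> V4" "a \<noteq> (\<lambda>_. 0)" "\<not> (\<exists>c. b = (\<lambda>x. c * a x))"
  shows "\<exists>i<4. \<exists>j<4. a i * b j - a j * b i \<noteq> 0"
proof (rule ccontr)
  assume H: "\<not> ?thesis"
  obtain i0 where i0: "a i0 \<noteq> 0" using assms(3) by auto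
  have "i0 < 4"
  proof (rule ccontr)
    assume "\<not> i0 < 4" then have "a i0 = 0" using assms(1) by (simp add: V4_def)
    with i0 show False by simp
  qed
  have "b = (\<lambda>x. (b i0 / a i0) * a x)"
  proof
    fix x show "b x = b i0 / a i0 * a x"
    proof (cases "x < 4")
      case True
      then have "a i0 * b x - a x * b i0 = 0" using H \<open>i0 < 4\<close> by auto
      then show ?thesis using i0 by (simp add: field_simps)
    next
      case False then show ?thesis using assms(1,2) by (simp add: V4_def)
    qed
  qed
  then show False using assms(4) by blast
qed

lemma C3_V4: "in_C3 b \<Longrightarrow> b \<in> V4"
  by (auto simp: in_C3_def V4_def)

lemma C3_nz: "in_C3 b \<Longrightarrow> b \<noteq> (\<lambda>_. 0)"
proof
  assume "in_C3 b" "b = (\<lambda>_. 0)"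
  then obtain s t where st: "s \<noteq> 0 \<or> t \<noteq> 0" "b = (\<lambda>i. if i < 4 then s ^ (3 - i) * t ^ i else 0)"
    unfolding in_C3_def by blast
  have "b 0 = s ^ 3" "b 3 = t ^ 3" using st(2) by simp_all
  then show False using st \<open>b = (\<lambda>_. 0)\<close> by (metis power_eq_0_iff)
qed

lemma cube_root: "\<exists>r::complex. r ^ 3 = c"
proof -
  let ?p = "[:-c, 0, 0, 1:]"
  have "degree ?p = 3" by simp
  then obtain z where "poly ?p z = 0"
    using fundamental_theorem_of_algebra[of ?p] constant_degree[of ?p] by auto
  then have "z ^ 3 = c" by (simp add: algebra_simps power3_eq_cube)
  then show ?thesis by blast
qed

lemma C3_scale:
  assumes "in_C3 b" "c \<noteq> 0"
  shows "in_C3 (\<lambda>i. c * b i)"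
proof -
  obtain s t where st: "s \<noteq> 0 \<or> t \<noteq> 0" "b = (\<lambda>i. if i < 4 then s ^ (3 - i) * t ^ i else 0)"
    using assms(1) unfolding in_C3_def by blast
  obtain r where r: "r ^ 3 = c" using cube_root by blast
  have r0: "r \<noteq> 0" using r assms(2) by auto
  have "(\<lambda>i. c * b i) = (\<lambda>i. if i < 4 then (r * s) ^ (3 - i) * (r * t) ^ i else 0)"
  proof
    fix i show "c * b i = (if i < 4 then (r * s) ^ (3 - i) * (r * t) ^ i else 0)"
    proof (cases "i < 4")
      case True
      have "(r * s) ^ (3 - i) * (r * t) ^ i = r ^ (3 - i + i) * (s ^ (3 - i) * t ^ i)"
        by (simp add: power_mult_distrib power_add algebra_simps)
      also have "3 - i + i = 3" using True by simp
      finally show ?thesis using True st(2) r by simp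
    qed (simp add: st(2))
  qed
  moreover have "r * s \<noteq> 0 \<or> r * t \<noteq> 0" using r0 st(1) by simp
  ultimately show ?thesis unfolding in_C3_def by blast
qed

lemma common_zero:
  assumes k: "k \<ge> 2"
    and rp: "\<forall>i\<le>k. (\<Sum>j<4. p j * v (i + j)) = 0"
    and rq: "\<forall>i\<le>k. (\<Sum>j<4. q j * v (i + j)) = 0"
    and nz: "\<exists>n<k+4. v n \<noteq> 0"
  shows "\<exists>b. in_C3 b \<and> pair4 b p = 0 \<and> pair4 b q = 0"
proof (cases "p 3 = 0 \<and> q 3 = 0")
  case True
  let ?b = "\<lambda>i::nat. if i < 4 then (0::complex) ^ (3 - i) * 1 ^ i else 0"
  have "in_C3 ?b" unfolding in_C3_def by (rule exI[of _ 0], rule exI[of _ 1]) simp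
  moreover have "pair4 ?b p = p 3" "pair4 ?b q = q 3" by (simp_all add: pair4_def sum4)
  ultimately show ?thesis using True by metis
next
  case False
  have "\<exists>z. poly (PP p) z = 0 \<and> poly (PP q) z = 0"
  proof (rule ccontr)
    assume nc: "\<not> ?thesis"
    obtain n where n: "n < k + 4" "v n \<noteq> 0" using nz by blast
    show False
    proof (cases "p 3 = 0")
      case False
      then show False using vanish[OF k False rp rq _ n(1)] nc n(2) by blast
    next
      case True
      then have "q 3 \<noteq> 0" using \<open>\<not> (p 3 = 0 \<and> q 3 = 0)\<close> by simp
      then show False using vanish[OF k _ rq rp _ n(1)] nc n(2) by blast
    qed
  qed
  then obtain z where z: "poly (PP p) z = 0" "poly (PP q) z = 0" by blast
  let ?b = "\<lambda>i::nat. if i < 4 then (1::complex) ^ (3 - i) * z ^ i else 0"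
  have "in_C3 ?b" unfolding in_C3_def by (rule exI[of _ 1], rule exI[of _ z]) simp
  moreover have "pair4 ?b f = poly (PP f) z" for f
    by (simp add: pair4_def poly_PP mult.commute)
  ultimately show ?thesis using z by metis
qed

theorem proposition5p7:
  fixes k :: nat and a :: "nat \<Rightarrow> complex" and l :: "(nat \<Rightarrow> complex) set"
  assumes "k \<ge> 2"
    and "a \<in> V4" and "a \<noteq> (\<lambda>_. 0)" and "\<not> in_C3 a"
    and "is_line l" and "l \<subseteq> plane a"
  shows "unstable_line k l \<longleftrightarrow>
           (\<exists>b. in_C3 b \<and> l = plane a \<inter> plane b)"
proof -
  obtain p q where pV: "p \<in> V4" and qV: "q \<in> V4"
    and ind: "\<forall>\<alpha> \<beta>. (\<forall>i. \<alpha> * p i + \<beta> * q i = 0) \<longrightarrow> \<alpha> = 0 \<and> \<beta> = 0"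
    and lE: "l = {x. \<exists>\<alpha> \<beta>. x = (\<lambda>i. \<alpha> * p i + \<beta> * q i)}"
    using assms(5) unfolding is_line_def by blast
  have pl: "p \<in> l" unfolding lE by (rule CollectI, rule exI[of _ 1], rule exI[of _ 0]) simp
  have ql: "q \<in> l" unfolding lE by (rule CollectI, rule exI[of _ 0], rule exI[of _ 1]) simp
  show ?thesis
  proof
    assume "unstable_line k l"
    then obtain v where vnz: "\<exists>j<k+4. v j \<noteq> 0"
      and vl: "\<forall>x\<in>l. \<forall>i\<le>k. tM_apply k x v i = 0"
      unfolding unstable_line_def by blast
    have rp: "\<forall>i\<le>k. (\<Sum>j<4. p j * v (i + j)) = 0"
      using vl pl by (simp add: tM_apply_def)
    have rq: "\<forall>i\<le>k. (\<Sum>j<4. q j * v (i + j)) = 0"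
      using vl ql by (simp add: tM_apply_def)
    obtain b where b: "in_C3 b" "pair4 b p = 0" "pair4 b q = 0"
      using common_zero[OF assms(1) rp rq vnz] by blast
    have "l = plane a \<inter> plane b"
    proof
      show "l \<subseteq> plane a \<inter> plane b"
      proof
        fix x assume xl: "x \<in> l"
        then obtain \<alpha> \<beta> where x: "x = (\<lambda>i. \<alpha> * p i + \<beta> * q i)" unfolding lE by blast
        have "x \<in> plane a" using xl assms(6) by blast
        moreover have "pair4 b x = 0" using b by (simp add: x pair4_lin)
        ultimately show "x \<in> plane a \<inter> plane b" by (simp add: plane_def)
      qed
    next
      show "plane a \<inter> plane b \<subseteq> l"
      proof
        fix x assume x: "x \<in> plane a \<inter> plane b"
        have bV: "b \<in> V4" using C3_V4[OF b(1)] .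
        have nm: "\<not> (\<exists>c. b = (\<lambda>x. c * a x))"
        proof
          assume "\<exists>c. b = (\<lambda>x. c * a x)"
          then obtain c where c: "b = (\<lambda>x. c * a x)" by blast
          have "c \<noteq> 0" using C3_nz[OF b(1)] c by auto
          then have "in_C3 (\<lambda>i. (1 / c) * b i)" using C3_scale[OF b(1), of "1 / c"] by auto
          moreover have "(\<lambda>i. (1 / c) * b i) = a" using c \<open>c \<noteq> 0\<close> by auto
          ultimately show False using assms(4) by simp
        qed
        obtain i j where ij: "i < 4" "j < 4" "a i * b j - a j * b i \<noteq> 0"
          using minor_exists[OF assms(2) bV assms(3) nm] by blast
        then have "i \<noteq> j" by auto
        then obtain m n where mn: "distinct [i, j, m, n]" "{i, j, m, n} = {..<4}"
          using perm_exists[OF ij(1,2)] by blast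
        have "pair4 a p = 0" "pair4 a q = 0" using pl ql assms(6) by (auto simp: plane_def)
        moreover have "pair4 a x = 0" "pair4 b x = 0" "x \<in> V4" using x by (auto simp: plane_def)
        ultimately obtain \<alpha> \<beta> where "x = (\<lambda>c. \<alpha> * p c + \<beta> * q c)"
          using kern_gen[OF mn ij(3) _ b(2) _ b(3) _ _ pV qV _ ind] by blast
        then show "x \<in> l" unfolding lE by blast
      qed
    qed
    then show "\<exists>b. in_C3 b \<and> l = plane a \<inter> plane b" using b(1) by blast
  next
    assume "\<exists>b. in_C3 b \<and> l = plane a \<inter> plane b"
    then obtain b where b: "in_C3 b" and lb: "l = plane a \<inter> plane b" by blast
    obtain s t where st: "s \<noteq> 0 \<or> t \<noteq> 0" "b = (\<lambda>i. if i < 4 then s ^ (3 - i) * t ^ i else 0)"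
      using b unfolding in_C3_def by blast
    define v where "v n = s ^ (k + 3 - n) * t ^ n" for n
    have nz: "\<exists>j<k+4. v j \<noteq> 0"
    proof (cases "s = 0")
      case False then show ?thesis by (intro exI[of _ 0]) (simp add: v_def)
    next
      case True then have "t \<noteq> 0" using st by simp
      then show ?thesis by (intro exI[of _ "k+3"]) (simp add: v_def)
    qed
    have "\<forall>x\<in>l. \<forall>i\<le>k. tM_apply k x v i = 0"
    proof (intro ballI allI impI)
      fix x i assume xl: "x \<in> l" and i: "i \<le> k"
      have pb: "pair4 b x = 0" using xl lb by (simp add: plane_def)
      have "tM_apply k x v i = (\<Sum>j<4. (s ^ (k - i) * t ^ i) * (b j * x j))"
      proof (unfold tM_apply_def, rule sum.cong[OF refl])
        fix j :: nat assume "j \<in> {..<4}"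
        then have j: "j < 4" by simp
        have "k + 3 - (i + j) = (k - i) + (3 - j)" using i j by simp
        then have "v (i + j) = s ^ (k - i) * s ^ (3 - j) * (t ^ i * t ^ j)"
          by (simp add: v_def power_add)
        then show "x j * v (i + j) = s ^ (k - i) * t ^ i * (b j * x j)"
          using j st(2) by (simp add: algebra_simps)
      qed
      also have "\<dots> = s ^ (k - i) * t ^ i * pair4 b x"
        by (simp add: pair4_def sum_distrib_left)
      finally show "tM_apply k x v i = 0" using pb by simp
    qed
    then show "unstable_line k l" using nz unfolding unstable_line_def by blast
  qed
qed

end
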